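(* Let $G$ be a graph without isolated vertices such that $d_G(u)+d_G(v)\ge 4$ for every edge $uv$ of $G$. Consider any stage of the total domination game on $G$ (starting with all vertices white) at which every legal move has value at most $4$, and let $R$ be the residual graph at this stage. Then every component $C$ of $R$ satisfies one of the following: (a) $C\cong P_4$, with both leaves blue and both internal vertices white; (b) $C\cong P_3$, with both leaves blue and the central vertex green; (c) $C\cong P_2$, with one vertex blue and the other green; (d) $C\cong P_2$, with one vertex blue and the other white.
   Context: The total domination game on a graph $G$ without isolated vertices: Dominator and Staller alternately choose vertices (Dominator first); a chosen vertex must be adjacent to at least one vertex not adjacent to any previously chosen vertex (such a vertex is a legal move); the game ends when every vertex of $G$ has a neighbor among the chosen vertices. At any stage, let $D$ be the set of vertices chosen so far. Each vertex is colored: white if it has no neighbor in $D$ and is not in $D$; green if it has no neighbor in $D$ but is in $D$; blue if it has a neighbor in $D$ but some neighbor of it has no neighbor in $D$; red if it and all its neighbors have a neighbor in $D$. Weights: white $3$, green $2$, blue $1$, red $0$; the value of a legal move is the decrease in the total weight (sum of all vertex weights) caused by playing it. The residual graph $R$ is obtained from $G$ by deleting all red vertices and all edges joining two blue vertices, with vertices keeping their colors. *)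

theory Defs
  imports Main
begin

definition simple_graph :: "'a set \<Rightarrow> ('a \<Rightarrow> 'a \<Rightarrow> bool) \<Rightarrow> bool" where
  "simple_graph V E \<longleftrightarrow> finite V \<and> (\<forall>u v. E u v \<longrightarrow> u \<in> V \<and> v \<in> V)
     \<and> (\<forall>u v. E u v \<longrightarrow> E v u) \<and> (\<forall>u. \<not> E u u)"

definition no_isolated :: "'a set \<Rightarrow> ('a \<Rightarrow> 'a \<Rightarrow> bool) \<Rightarrow> bool" where
  "no_isolated V E \<longleftrightarrow> (\<forall>v\<in>V. \<exists>u. E v u)"

definition degree :: "('a \<Rightarrow> 'a \<Rightarrow> bool) \<Rightarrow> 'a \<Rightarrow> nat" where
  "degree E v = card {u. E v u}"

definition tdom :: "('a \<Rightarrow> 'a \<Rightarrow> bool) \<Rightarrow> 'a set \<Rightarrow> 'a \<Rightarrow> bool" where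
  "tdom E D u \<longleftrightarrow> (\<exists>w\<in>D. E u w)"

definition white :: "('a \<Rightarrow> 'a \<Rightarrow> bool) \<Rightarrow> 'a set \<Rightarrow> 'a \<Rightarrow> bool" where
  "white E D u \<longleftrightarrow> \<not> tdom E D u \<and> u \<notin> D"

definition green :: "('a \<Rightarrow> 'a \<Rightarrow> bool) \<Rightarrow> 'a set \<Rightarrow> 'a \<Rightarrow> bool" where
  "green E D u \<longleftrightarrow> \<not> tdom E D u \<and> u \<in> D"

definition blue :: "('a \<Rightarrow> 'a \<Rightarrow> bool) \<Rightarrow> 'a set \<Rightarrow> 'a \<Rightarrow> bool" where
  "blue E D u \<longleftrightarrow> tdom E D u \<and> (\<exists>w. E u w \<and> \<not> tdom E D w)"

definition red :: "('a \<Rightarrow> 'a \<Rightarrow> bool) \<Rightarrow> 'a set \<Rightarrow> 'a \<Rightarrow> bool" where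
  "red E D u \<longleftrightarrow> tdom E D u \<and> (\<forall>w. E u w \<longrightarrow> tdom E D w)"

definition weight :: "('a \<Rightarrow> 'a \<Rightarrow> bool) \<Rightarrow> 'a set \<Rightarrow> 'a \<Rightarrow> nat" where
  "weight E D u = (if white E D u then 3 else if green E D u then 2
                   else if blue E D u then 1 else 0)"

definition total_weight :: "'a set \<Rightarrow> ('a \<Rightarrow> 'a \<Rightarrow> bool) \<Rightarrow> 'a set \<Rightarrow> nat" where
  "total_weight V E D = (\<Sum>u\<in>V. weight E D u)"

definition legal_move :: "'a set \<Rightarrow> ('a \<Rightarrow> 'a \<Rightarrow> bool) \<Rightarrow> 'a set \<Rightarrow> 'a \<Rightarrow> bool" where
  "legal_move V E D v \<longleftrightarrow> v \<in> V \<and> (\<exists>u. E v u \<and> \<not> tdom E D u)"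

definition move_value :: "'a set \<Rightarrow> ('a \<Rightarrow> 'a \<Rightarrow> bool) \<Rightarrow> 'a set \<Rightarrow> 'a \<Rightarrow> int" where
  "move_value V E D v = int (total_weight V E D) - int (total_weight V E (insert v D))"

inductive game_stage :: "'a set \<Rightarrow> ('a \<Rightarrow> 'a \<Rightarrow> bool) \<Rightarrow> 'a set \<Rightarrow> bool"
  for V E where
  start: "game_stage V E {}"
| move: "game_stage V E D \<Longrightarrow> legal_move V E D v \<Longrightarrow> game_stage V E (insert v D)"

definition res_vert :: "'a set \<Rightarrow> ('a \<Rightarrow> 'a \<Rightarrow> bool) \<Rightarrow> 'a set \<Rightarrow> 'a \<Rightarrow> bool" where
  "res_vert V E D u \<longleftrightarrow> u \<in> V \<and> \<not> red E D u"

definition res_edge :: "'a set \<Rightarrow> ('a \<Rightarrow> 'a \<Rightarrow> bool) \<Rightarrow> 'a set \<Rightarrow> 'a \<Rightarrow> 'a \<Rightarrow> bool" where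
  "res_edge V E D u v \<longleftrightarrow> E u v \<and> res_vert V E D u \<and> res_vert V E D v
      \<and> \<not> (blue E D u \<and> blue E D v)"

definition res_component :: "'a set \<Rightarrow> ('a \<Rightarrow> 'a \<Rightarrow> bool) \<Rightarrow> 'a set \<Rightarrow> 'a \<Rightarrow> 'a set" where
  "res_component V E D x = {y. (res_edge V E D)\<^sup>*\<^sup>* x y}"

definition res_edges_on :: "'a set \<Rightarrow> ('a \<Rightarrow> 'a \<Rightarrow> bool) \<Rightarrow> 'a set \<Rightarrow> 'a set \<Rightarrow> 'a set set \<Rightarrow> bool" where
  "res_edges_on V E D C F \<longleftrightarrow> (\<forall>u\<in>C. \<forall>w\<in>C. res_edge V E D u w \<longleftrightarrow> {u, w} \<in> F)"

end

theory Submission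
  imports Defs
begin

lemma tdom_mono: "tdom E D u \<Longrightarrow> tdom E (insert v D) u"
  by (auto simp: tdom_def)
lemma tdom_ins: "E u v \<Longrightarrow> tdom E (insert v D) u"
  by (auto simp: tdom_def)
lemma wt_white: "white E D u \<Longrightarrow> weight E D u = 3" by (simp add: weight_def)
lemma wt_green: "green E D u \<Longrightarrow> weight E D u = 2" by (simp add: weight_def white_def green_def)
lemma wt_blue: "blue E D u \<Longrightarrow> weight E D u = 1" by (simp add: weight_def white_def green_def blue_def)
lemma wt_le1: "tdom E D u \<Longrightarrow> weight E D u \<le> 1" by (simp add: weight_def white_def green_def)
lemma wt_0: "tdom E D u \<Longrightarrow> (\<forall>w. E u w \<longrightarrow> tdom E D w) \<Longrightarrow> weight E D u = 0"
  by (auto simp add: weight_def white_def green_def blue_def)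

lemma wt_le3: "weight E D u \<le> 3" by (simp add: weight_def)

lemma weight_mono: "weight E (insert v D) u \<le> weight E D u"
proof (cases "tdom E D u")
  case True
  hence t: "tdom E (insert v D) u" by (rule tdom_mono)
  show ?thesis
  proof (cases "\<forall>w. E u w \<longrightarrow> tdom E D w")
    case True
    hence a: "\<forall>w. E u w \<longrightarrow> tdom E (insert v D) w" using tdom_mono[of E D _ v] by blast
    show ?thesis using wt_0[OF t a] by simp
  next
    case False
    hence b: "blue E D u" using \<open>tdom E D u\<close> by (auto simp: blue_def)
    show ?thesis using wt_blue[OF b] wt_le1[OF t] by simp
  qed
next
  case False
  show ?thesis
  proof (cases "u \<in> D")
    case True
    hence g: "green E D u" using False by (simp add: green_def)
    show ?thesis
    proof (cases "tdom E (insert v D) u")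
      case True show ?thesis using wt_le1[OF True] wt_green[OF g] by simp
    next
      case False
      hence g2: "green E (insert v D) u" using \<open>u \<in> D\<close> by (simp add: green_def)
      show ?thesis using wt_green[OF g] wt_green[OF g2] by simp
    qed
  next
    case False
    hence w: "white E D u" using \<open>\<not> tdom E D u\<close> by (simp add: white_def)
    show ?thesis using wt_white[OF w] wt_le3[of E "insert v D" u] by simp
  qed
qed

definition good :: "'a set \<Rightarrow> ('a \<Rightarrow> 'a \<Rightarrow> bool) \<Rightarrow> 'a set \<Rightarrow> 'a set \<Rightarrow> bool" where
  "good V E D C \<longleftrightarrow>
     (\<exists>a b c d. distinct [a, b, c, d] \<and> C = {a, b, c, d}
        \<and> res_edges_on V E D C {{a, b}, {b, c}, {c, d}}
        \<and> blue E D a \<and> white E D b \<and> white E D c \<and> blue E D d)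
   \<or> (\<exists>a b c. distinct [a, b, c] \<and> C = {a, b, c}
        \<and> res_edges_on V E D C {{a, b}, {b, c}}
        \<and> blue E D a \<and> green E D b \<and> blue E D c)
   \<or> (\<exists>a b. a \<noteq> b \<and> C = {a, b} \<and> res_edges_on V E D C {{a, b}}
        \<and> blue E D a \<and> green E D b)
   \<or> (\<exists>a b. a \<noteq> b \<and> C = {a, b} \<and> res_edges_on V E D C {{a, b}}
        \<and> blue E D a \<and> white E D b)"

lemma comp_eq:
  assumes "u \<in> S" "\<forall>a\<in>S. \<forall>y. res_edge V E D a y \<longrightarrow> y \<in> S"
    "\<forall>y\<in>S. (res_edge V E D)\<^sup>*\<^sup>* u y"
  shows "res_component V E D u = S"
proof
  show "res_component V E D u \<subseteq> S"
  proof
    fix y assume "y \<in> res_component V E D u"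
    hence "(res_edge V E D)\<^sup>*\<^sup>* u y" by (simp add: res_component_def)
    thus "y \<in> S"
    proof induction
      case base show ?case using assms(1) .
    next
      case (step y z) thus ?case using assms(2) by blast
    qed
  qed
  show "S \<subseteq> res_component V E D u" using assms(3) by (auto simp: res_component_def)
qed

locale tdg =
  fixes V :: "'a set" and E and D
  assumes sg: "simple_graph V E" and noiso: "no_isolated V E"
    and deg: "\<forall>u v. E u v \<longrightarrow> degree E u + degree E v \<ge> 4"
    and val4: "\<forall>v. legal_move V E D v \<longrightarrow> move_value V E D v \<le> 4"
begin

lemma sym: "E u v \<Longrightarrow> E v u" using sg by (auto simp: simple_graph_def)
lemma inV1: "E u v \<Longrightarrow> u \<in> V" using sg by (auto simp: simple_graph_def)
lemma inV2: "E u v \<Longrightarrow> v \<in> V" using sg by (auto simp: simple_graph_def)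
lemma irr: "\<not> E u u" using sg by (auto simp: simple_graph_def)
lemma finV: "finite V" using sg by (auto simp: simple_graph_def)

definition dr :: "'a \<Rightarrow> 'a \<Rightarrow> int" where
  "dr v u = int (weight E D u) - int (weight E (insert v D) u)"

lemma dr_nonneg: "dr v u \<ge> 0" using weight_mono[of E v D u] by (simp add: dr_def)

lemma value_sum: "move_value V E D v = (\<Sum>u\<in>V. dr v u)"
  by (simp add: move_value_def total_weight_def dr_def sum_subtractf)

lemma value_ge: "T \<subseteq> V \<Longrightarrow> (\<Sum>u\<in>T. dr v u) \<le> move_value V E D v"
  unfolding value_sum by (rule sum_mono2[OF finV]) (auto simp: dr_nonneg)

lemma value_ge3: "distinct [a,b,c] \<Longrightarrow> a \<in> V \<Longrightarrow> b \<in> V \<Longrightarrow> c \<in> V \<Longrightarrow>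
   dr v a + dr v b + dr v c \<le> move_value V E D v"
  using value_ge[of "{a,b,c}" v] by auto

lemma value_ge4: "distinct [a,b,c,d] \<Longrightarrow> a \<in> V \<Longrightarrow> b \<in> V \<Longrightarrow> c \<in> V \<Longrightarrow> d \<in> V \<Longrightarrow>
   dr v a + dr v b + dr v c + dr v d \<le> move_value V E D v"
  using value_ge[of "{a,b,c,d}" v] by (auto simp: add.assoc)

lemma legal: "E y u \<Longrightarrow> \<not> tdom E D u \<Longrightarrow> move_value V E D y \<le> 4"
  using val4 inV1 by (auto simp: legal_move_def)

lemma notinD: "\<not> tdom E D u \<Longrightarrow> E u y \<Longrightarrow> y \<notin> D"
  by (auto simp: tdom_def)

lemma dU: assumes "E v u" "\<not> tdom E D u" shows "dr v u \<ge> 2"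
proof -
  have t: "tdom E (insert v D) u" by (rule tdom_ins) (rule sym[OF assms(1)])
  show ?thesis
  proof (cases "u \<in> D")
    case True
    hence "green E D u" using assms by (simp add: green_def)
    hence "weight E D u = 2" by (rule wt_green)
    moreover have "weight E (insert v D) u = 0"
    proof (rule wt_0[OF t], intro allI impI)
      fix w assume "E u w"
      hence "tdom E D w" using True sym[of u w] unfolding tdom_def by blast
      thus "tdom E (insert v D) w" by (rule tdom_mono)
    qed
    ultimately show ?thesis by (simp add: dr_def)
  next
    case False
    hence "white E D u" using assms by (simp add: white_def)
    hence "weight E D u = 3" by (rule wt_white)
    moreover have "weight E (insert v D) u \<le> 1" by (rule wt_le1[OF t])
    ultimately show ?thesis by (simp add: dr_def)
  qed
qed

lemma dAll: assumes "tdom E (insert v D) u" "\<forall>w. E u w \<longrightarrow> tdom E (insert v D) w"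
  shows "dr v u = int (weight E D u)"
  using wt_0[OF assms] by (simp add: dr_def)

lemma dBr: assumes "blue E D b" "\<forall>w. E b w \<longrightarrow> tdom E (insert v D) w"
  shows "dr v b = 1"
proof -
  have "tdom E (insert v D) b" using assms(1) tdom_mono[of E D b v] by (auto simp: blue_def)
  thus ?thesis using dAll assms wt_blue by simp
qed

lemma dself_white: assumes "white E D v" shows "dr v v \<ge> 1"
proof -
  have "green E (insert v D) v" using assms irr by (auto simp: white_def green_def tdom_def)
  thus ?thesis using wt_green[of E "insert v D" v] wt_white[OF assms] by (simp add: dr_def)
qed

lemma dself_blue: assumes "blue E D b" shows "dr b b = 1"
proof (rule dBr[OF assms], intro allI impI)
  fix w assume "E b w"
  thus "tdom E (insert b D) w" using tdom_ins[of E w b D] sym[of b w] by blast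
qed

lemma nbrU_blue: "\<not> tdom E D u \<Longrightarrow> E u y \<Longrightarrow> tdom E D y \<Longrightarrow> blue E D y"
  using sym[of u y] unfolding blue_def by blast

lemma UU_white: "\<not> tdom E D u \<Longrightarrow> E u y \<Longrightarrow> \<not> tdom E D y \<Longrightarrow> white E D u"
  using notinD[of y u] sym[of u y] unfolding white_def by blast

lemma blue_uniq:
  assumes "blue E D b" "E b u" "\<not> tdom E D u" "E b u'" "\<not> tdom E D u'"
  shows "u' = u"
proof (rule ccontr)
  assume ne: "u' \<noteq> u"
  have "tdom E D b" using assms(1) by (simp add: blue_def)
  hence d: "distinct [b,u,u']" using ne assms(3,5) by auto
  have m: "b \<in> V" "u \<in> V" "u' \<in> V" using inV1[OF assms(2)] inV2[OF assms(2)] inV2[OF assms(4)] .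
  have "dr b b + dr b u + dr b u' \<le> move_value V E D b"
    using value_ge3[OF d m] .
  moreover have "move_value V E D b \<le> 4" using legal[OF assms(2,3)] .
  moreover have "dr b b = 1" using dself_blue[OF assms(1)] .
  moreover have "dr b u \<ge> 2" using dU[OF assms(2,3)] .
  moreover have "dr b u' \<ge> 2" using dU[OF assms(4,5)] .
  ultimately show False by linarith
qed

lemma blue_red_after:
  assumes "blue E D b" "E b u" "\<not> tdom E D u" "E v u"
  shows "dr v b = 1"
proof (rule dBr[OF assms(1)], intro allI impI)
  fix w assume bw: "E b w"
  show "tdom E (insert v D) w"
  proof (cases "tdom E D w")
    case True thus ?thesis by (rule tdom_mono)
  next
    case False
    hence "w = u" using blue_uniq[OF assms(1,2,3) bw] by simp
    thus ?thesis using tdom_ins[where E=E and D=D, OF sym[OF assms(4)]] by simp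
  qed
qed

lemma green3: assumes "\<not> tdom E D g" "g \<in> D" "E g b1" "E g b2" "E g b3" "distinct [b1,b2,b3]"
  shows False
proof -
  have tb: "tdom E D y" if "E g y" for y using assms(2) sym[OF that] by (auto simp: tdom_def)
  have bl: "blue E D y" if "E g y" for y using nbrU_blue[OF assms(1) that tb[OF that]] .
  have "green E D g" using assms by (simp add: green_def)
  hence w: "weight E D g = 2" by (rule wt_green)
  have t1: "tdom E (insert b1 D) g" using tdom_ins[where E=E and D=D, OF assms(3)] .
  have t2: "\<forall>w. E g w \<longrightarrow> tdom E (insert b1 D) w" using tb tdom_mono[of E D _ b1] by blast
  have "dr b1 g = 2" using dAll[OF t1 t2] w by simp
  moreover have "dr b1 b1 = 1" using dself_blue[OF bl[OF assms(3)]] .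
  moreover have "dr b1 b2 = 1" using blue_red_after[OF bl[OF assms(4)] sym[OF assms(4)] assms(1) sym[OF assms(3)]] .
  moreover have "dr b1 b3 = 1" using blue_red_after[OF bl[OF assms(5)] sym[OF assms(5)] assms(1) sym[OF assms(3)]] .
  moreover have d: "distinct [g,b1,b2,b3]" using assms irr by auto
  have m: "g \<in> V" "b1 \<in> V" "b2 \<in> V" "b3 \<in> V" using inV1[OF assms(3)] inV2[OF assms(3)] inV2[OF assms(4)] inV2[OF assms(5)] .
  have "dr b1 g + dr b1 b1 + dr b1 b2 + dr b1 b3 \<le> move_value V E D b1"
    using value_ge4[OF d m] .
  moreover have "move_value V E D b1 \<le> 4" using legal[OF sym[OF assms(3)] assms(1)] .
  ultimately show False by linarith
qed

lemma white_nowhite2: assumes "white E D w" "\<forall>y. E w y \<longrightarrow> tdom E D y" "E w b1" "E w b2" "b1 \<noteq> b2"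
  shows False
proof -
  have nt: "\<not> tdom E D w" using assms(1) by (simp add: white_def)
  have bl: "blue E D y" if "E w y" for y using nbrU_blue[OF nt that] assms(2) that by blast
  have t1: "tdom E (insert b1 D) w" using tdom_ins[where E=E and D=D, OF assms(3)] .
  have t2: "\<forall>y. E w y \<longrightarrow> tdom E (insert b1 D) y" using assms(2) tdom_mono[of E D _ b1] by blast
  have "dr b1 w = 3" using dAll[OF t1 t2] wt_white[OF assms(1)] by simp
  moreover have "dr b1 b1 = 1" using dself_blue[OF bl[OF assms(3)]] .
  moreover have "dr b1 b2 = 1" using blue_red_after[OF bl[OF assms(4)] sym[OF assms(4)] nt sym[OF assms(3)]] .
  moreover have d: "distinct [w,b1,b2]" using assms irr by auto
  have m: "w \<in> V" "b1 \<in> V" "b2 \<in> V" using inV1[OF assms(3)] inV2[OF assms(3)] inV2[OF assms(4)] .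
  have "dr b1 w + dr b1 b1 + dr b1 b2 \<le> move_value V E D b1"
    using value_ge3[OF d m] .
  moreover have "move_value V E D b1 \<le> 4" using legal[OF sym[OF assms(3)] nt] .
  ultimately show False by linarith
qed

lemma WW1: assumes "white E D w" "E w w'" "\<not> tdom E D w'" "E w u" "\<not> tdom E D u"
  shows "u = w'"
proof (rule ccontr)
  assume ne: "u \<noteq> w'"
  have d: "distinct [w,w',u]" using ne assms irr by auto
  have m: "w \<in> V" "w' \<in> V" "u \<in> V" using inV1[OF assms(2)] inV2[OF assms(2)] inV2[OF assms(4)] .
  have "dr w w + dr w w' + dr w u \<le> move_value V E D w"
    using value_ge3[OF d m] .
  moreover have "move_value V E D w \<le> 4" using legal[OF assms(2,3)] .
  moreover have "dr w w \<ge> 1" using dself_white[OF assms(1)] .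
  moreover have "dr w w' \<ge> 2" using dU[OF assms(2,3)] .
  moreover have "dr w u \<ge> 2" using dU[OF assms(4,5)] .
  ultimately show False by linarith
qed

lemma WW2: assumes "white E D w" "E w w'" "\<not> tdom E D w'" "E w' b1" "E w' b2"
   "b1 \<noteq> w" "b2 \<noteq> w" "b1 \<noteq> b2"
  shows False
proof -
  have ntw: "\<not> tdom E D w" using assms(1) by (simp add: white_def)
  have ww: "white E D w'" using UU_white[OF assms(3) sym[OF assms(2)] ntw] .
  have tb: "tdom E D y" if "E w' y" "y \<noteq> w" for y
    using WW1[OF ww sym[OF assms(2)] ntw that(1)] that by blast
  have bl: "blue E D y" if "E w' y" "y \<noteq> w" for y
    using nbrU_blue[OF assms(3) that(1) tb[OF that]] .
  have "dr w b1 = 1" using blue_red_after[OF bl[OF assms(4,6)] sym[OF assms(4)] assms(3) assms(2)] .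
  moreover have "dr w b2 = 1" using blue_red_after[OF bl[OF assms(5,7)] sym[OF assms(5)] assms(3) assms(2)] .
  moreover have d: "distinct [w,w',b1,b2]" using assms irr by auto
  have m: "w \<in> V" "w' \<in> V" "b1 \<in> V" "b2 \<in> V" using inV1[OF assms(2)] inV2[OF assms(2)] inV2[OF assms(4)] inV2[OF assms(5)] .
  have "dr w w + dr w w' + dr w b1 + dr w b2 \<le> move_value V E D w"
    using value_ge4[OF d m] .
  moreover have "move_value V E D w \<le> 4" using legal[OF assms(2,3)] .
  moreover have "dr w w \<ge> 1" using dself_white[OF assms(1)] .
  moreover have "dr w w' \<ge> 2" using dU[OF assms(2,3)] .
  ultimately show False by linarith
qed

lemma card2: "card {a, b} \<le> 2" by (cases "a = b") auto

lemma WWdeg2: assumes "white E D w" "E w w'" "\<not> tdom E D w'"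
  shows "degree E w \<le> 2"
proof (cases "\<exists>b. E w b \<and> b \<noteq> w'")
  case True
  then obtain b where b: "E w b" "b \<noteq> w'" by blast
  have ntw: "\<not> tdom E D w" using assms(1) by (simp add: white_def)
  have ww: "white E D w'" using UU_white[OF assms(3) sym[OF assms(2)] ntw] .
  have "y \<in> {w', b}" if "E w y" for y
  proof (rule ccontr)
    assume "y \<notin> {w', b}"
    thus False using WW2[OF ww sym[OF assms(2)] ntw b(1) that] b(2) by auto
  qed
  hence "{y. E w y} \<subseteq> {w', b}" by blast
  hence "degree E w \<le> card {w', b}" unfolding degree_def by (rule card_mono[rotated]) simp
  thus ?thesis using card2[of w' b] by linarith
next
  case False
  hence "{y. E w y} \<subseteq> {w'}" by auto
  hence "degree E w \<le> card {w'}" unfolding degree_def by (rule card_mono[rotated]) simp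
  thus ?thesis by simp
qed

lemma WWex: assumes "white E D w" "E w w'" "\<not> tdom E D w'"
  shows "\<exists>b. E w b \<and> b \<noteq> w'"
proof (rule ccontr)
  assume "\<not> ?thesis"
  hence "{y. E w y} \<subseteq> {w'}" by auto
  hence "degree E w \<le> card {w'}" unfolding degree_def by (rule card_mono[rotated]) simp
  moreover have ntw: "\<not> tdom E D w" using assms(1) by (simp add: white_def)
  have ww: "white E D w'" using UU_white[OF assms(3) sym[OF assms(2)] ntw] .
  have "degree E w' \<le> 2" by (rule WWdeg2[OF ww sym[OF assms(2)] ntw])
  moreover have "degree E w + degree E w' \<ge> 4" using deg assms(2) by simp
  ultimately show False by simp
qed

lemma res_edge_sym: "res_edge V E D u v \<Longrightarrow> res_edge V E D v u"
  using sym[of u v] unfolding res_edge_def by blast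

lemma RE_U: assumes "\<not> tdom E D u" "u \<in> V" shows "res_edge V E D u y = E u y"
proof
  assume "E u y"
  moreover have "\<not> red E D y" using assms(1) sym[OF \<open>E u y\<close>] by (auto simp: red_def)
  ultimately show "res_edge V E D u y"
    using assms inV2[OF \<open>E u y\<close>] by (simp add: res_edge_def res_vert_def red_def blue_def)
qed (simp add: res_edge_def)

lemma RE_B: assumes "blue E D b" shows "res_edge V E D b y = (E b y \<and> \<not> tdom E D y)"
proof
  assume r: "res_edge V E D b y"
  have "\<not> tdom E D y"
  proof
    assume "tdom E D y"
    moreover have "\<not> red E D y" using r by (simp add: res_edge_def res_vert_def)
    ultimately have "blue E D y" by (auto simp: red_def blue_def)
    thus False using r assms by (simp add: res_edge_def)
  qed
  thus "E b y \<and> \<not> tdom E D y" using r by (simp add: res_edge_def)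
next
  assume a: "E b y \<and> \<not> tdom E D y"
  hence "res_edge V E D y b" using RE_U[of y b] inV2[of b y] sym[of b y] by simp
  thus "res_edge V E D b y" by (rule res_edge_sym)
qed

lemma comp_shift: assumes "res_edge V E D a c"
  shows "res_component V E D a = res_component V E D c"
proof -
  have c: "res_edge V E D c a" using res_edge_sym assms .
  show ?thesis unfolding res_component_def
  proof (intro Collect_cong iffI)
    fix y assume "(res_edge V E D)\<^sup>*\<^sup>* a y"
    thus "(res_edge V E D)\<^sup>*\<^sup>* c y" by (rule converse_rtranclp_into_rtranclp[of "res_edge V E D", OF c])
  next
    fix y assume "(res_edge V E D)\<^sup>*\<^sup>* c y"
    thus "(res_edge V E D)\<^sup>*\<^sup>* a y" by (rule converse_rtranclp_into_rtranclp[of "res_edge V E D", OF assms])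
  qed
qed


lemma main_U: assumes nt: "\<not> tdom E D u" and uV: "u \<in> V"
  shows "good V E D (res_component V E D u)"
proof -
  have ru: "res_edge V E D u z \<longleftrightarrow> E u z" for z using RE_U[OF nt uV] .
  show ?thesis
  proof (cases "u \<in> D")
    case uD: True
    have gr: "green E D u" using nt uD by (simp add: green_def)
    obtain b1 where ub1: "E u b1" using noiso uV unfolding no_isolated_def by blast
    have tb: "tdom E D y" if "E u y" for y using uD sym[OF that] by (auto simp: tdom_def)
    have bl: "blue E D y" if "E u y" for y using nbrU_blue[OF nt that tb[OF that]] .
    have rb: "res_edge V E D y z \<longleftrightarrow> z = u" if "E u y" for y z
    proof -
      have "(E y z \<and> \<not> tdom E D z) \<longleftrightarrow> z = u"
        using blue_uniq[OF bl[OF that] sym[OF that] nt, of z] sym[OF that] nt by blast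
      thus ?thesis using RE_B[OF bl[OF that]] by simp
    qed
    show ?thesis
    proof (cases "\<exists>b2. E u b2 \<and> b2 \<noteq> b1")
      case True
      then obtain b2 where ub2: "E u b2" and ne: "b2 \<noteq> b1" by blast
      have nb: "E u y \<longleftrightarrow> y = b1 \<or> y = b2" for y
      proof
        assume uy: "E u y"
        show "y = b1 \<or> y = b2"
        proof (rule ccontr)
          assume "\<not> (y = b1 \<or> y = b2)"
          hence "distinct [b1,b2,y]" using ne by auto
          thus False using green3[OF nt uD ub1 ub2 uy] by blast
        qed
      qed (use ub1 ub2 in auto)
      have d: "distinct [b1,u,b2]" using ne irr ub1 ub2 by auto
      have r1: "res_edge V E D b1 z \<longleftrightarrow> z = u" for z using rb[OF ub1] .
      have r2: "res_edge V E D b2 z \<longleftrightarrow> z = u" for z using rb[OF ub2] .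
      have C: "res_component V E D u = {b1,u,b2}"
      proof (rule comp_eq)
        show "\<forall>a\<in>{b1, u, b2}. \<forall>y. res_edge V E D a y \<longrightarrow> y \<in> {b1, u, b2}"
          using r1 r2 ru nb by auto
        show "\<forall>y\<in>{b1, u, b2}. (res_edge V E D)\<^sup>*\<^sup>* u y"
          using r_into_rtranclp[of "res_edge V E D", OF ru[THEN iffD2, OF ub1]] r_into_rtranclp[of "res_edge V E D", OF ru[THEN iffD2, OF ub2]] by auto
      qed simp
      have RE: "res_edges_on V E D {b1,u,b2} {{b1,u},{u,b2}}"
        unfolding res_edges_on_def using r1 r2 ru nb d by (auto simp: doubleton_eq_iff)
      have "\<exists>a b c. distinct [a, b, c] \<and> res_component V E D u = {a, b, c}
        \<and> res_edges_on V E D (res_component V E D u) {{a, b}, {b, c}}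
        \<and> blue E D a \<and> green E D b \<and> blue E D c"
        by (rule exI[of _ b1], rule exI[of _ u], rule exI[of _ b2]) (use RE d C gr bl[OF ub1] bl[OF ub2] in simp)
      thus ?thesis unfolding good_def by blast
    next
      case False
      have nb: "E u y \<longleftrightarrow> y = b1" for y
      proof
        assume "E u y" thus "y = b1" using False by blast
      qed (use ub1 in simp)
      have d: "b1 \<noteq> u" using irr ub1 by auto
      have r1: "res_edge V E D b1 z \<longleftrightarrow> z = u" for z using rb[OF ub1] .
      have C: "res_component V E D u = {b1,u}"
      proof (rule comp_eq)
        show "\<forall>a\<in>{b1, u}. \<forall>y. res_edge V E D a y \<longrightarrow> y \<in> {b1, u}"
          using r1 ru nb by auto
        show "\<forall>y\<in>{b1, u}. (res_edge V E D)\<^sup>*\<^sup>* u y"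
          using r_into_rtranclp[of "res_edge V E D", OF ru[THEN iffD2, OF ub1]] by auto
      qed simp
      have RE: "res_edges_on V E D {b1,u} {{b1,u}}"
        unfolding res_edges_on_def using r1 ru nb d by (auto simp: doubleton_eq_iff)
      have "\<exists>a b. a \<noteq> b \<and> res_component V E D u = {a, b}
        \<and> res_edges_on V E D (res_component V E D u) {{a, b}}
        \<and> blue E D a \<and> green E D b"
        by (rule exI[of _ b1], rule exI[of _ u]) (use RE d C gr bl[OF ub1] in simp)
      thus ?thesis unfolding good_def by blast
    qed
  next
    case uD: False
    have wu: "white E D u" using nt uD by (simp add: white_def)
    show ?thesis
    proof (cases "\<exists>w'. E u w' \<and> \<not> tdom E D w'")
      case True
      then obtain w' where uw': "E u w'" and w'nt: "\<not> tdom E D w'" by blast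
      have ww': "white E D w'" using UU_white[OF w'nt sym[OF uw'] nt] .
      have w'V: "w' \<in> V" using inV2[OF uw'] .
      obtain b where ub: "E u b" and bne: "b \<noteq> w'" using WWex[OF wu uw' w'nt] by blast
      obtain b' where wb': "E w' b'" and b'ne: "b' \<noteq> u" using WWex[OF ww' sym[OF uw'] nt] by blast
      have nu: "E u y \<longleftrightarrow> y = w' \<or> y = b" for y
      proof
        assume uy: "E u y"
        show "y = w' \<or> y = b"
        proof (rule ccontr)
          assume "\<not> (y = w' \<or> y = b)"
          thus False using WW2[OF ww' sym[OF uw'] nt ub uy bne] by auto
        qed
      qed (use ub uw' in auto)
      have nw: "E w' y \<longleftrightarrow> y = u \<or> y = b'" for y
      proof
        assume wy: "E w' y"
        show "y = u \<or> y = b'"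
        proof (rule ccontr)
          assume "\<not> (y = u \<or> y = b')"
          thus False using WW2[OF wu uw' w'nt wb' wy b'ne] by auto
        qed
      qed (use wb' sym[OF uw'] in auto)
      have tb: "tdom E D b"
      proof (rule ccontr)
        assume "\<not> tdom E D b"
        thus False using WW1[OF wu uw' w'nt ub] bne by blast
      qed
      have tb': "tdom E D b'"
      proof (rule ccontr)
        assume "\<not> tdom E D b'"
        thus False using WW1[OF ww' sym[OF uw'] nt wb'] b'ne by blast
      qed
      have blb: "blue E D b" using nbrU_blue[OF nt ub tb] .
      have blb': "blue E D b'" using nbrU_blue[OF w'nt wb' tb'] .
      have rb: "res_edge V E D b z \<longleftrightarrow> z = u" for z
      proof -
        have "(E b z \<and> \<not> tdom E D z) \<longleftrightarrow> z = u"
          using blue_uniq[OF blb sym[OF ub] nt, of z] sym[OF ub] nt by blast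
        thus ?thesis using RE_B[OF blb] by simp
      qed
      have rb': "res_edge V E D b' z \<longleftrightarrow> z = w'" for z
      proof -
        have "(E b' z \<and> \<not> tdom E D z) \<longleftrightarrow> z = w'"
          using blue_uniq[OF blb' sym[OF wb'] w'nt, of z] sym[OF wb'] w'nt by blast
        thus ?thesis using RE_B[OF blb'] by simp
      qed
      have rw: "res_edge V E D w' z \<longleftrightarrow> z = u \<or> z = b'" for z using RE_U[OF w'nt w'V] nw by simp
      have ru2: "res_edge V E D u z \<longleftrightarrow> z = w' \<or> z = b" for z using ru nu by simp
      have bb: "b \<noteq> b'"
      proof
        assume "b = b'"
        hence "w' = u" using rb rb'[of w'] by simp
        thus False using irr uw' by simp
      qed
      have d: "distinct [b,u,w',b']" using bb bne b'ne irr ub uw' wb' by auto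
      have C: "res_component V E D u = {b,u,w',b'}"
      proof (rule comp_eq)
        show "\<forall>a\<in>{b,u,w',b'}. \<forall>y. res_edge V E D a y \<longrightarrow> y \<in> {b,u,w',b'}"
          using rb rb' rw ru2 by auto
        have 1: "res_edge V E D u w'" "res_edge V E D u b" "res_edge V E D w' b'" using ru2 rw by auto
        show "\<forall>y\<in>{b,u,w',b'}. (res_edge V E D)\<^sup>*\<^sup>* u y"
          using 1 rtranclp.rtrancl_into_rtrancl[of "res_edge V E D", OF r_into_rtranclp[of "res_edge V E D", OF 1(1)] 1(3)] r_into_rtranclp[of "res_edge V E D", OF 1(1)] r_into_rtranclp[of "res_edge V E D", OF 1(2)] by auto
      qed simp
      have RE: "res_edges_on V E D {b,u,w',b'} {{b,u},{u,w'},{w',b'}}"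
        unfolding res_edges_on_def using rb rb' rw ru2 d by (auto simp: doubleton_eq_iff)
      have "\<exists>a b c d. distinct [a, b, c, d] \<and> res_component V E D u = {a, b, c, d}
        \<and> res_edges_on V E D (res_component V E D u) {{a, b}, {b, c}, {c, d}}
        \<and> blue E D a \<and> white E D b \<and> white E D c \<and> blue E D d"
        by (rule exI[of _ b], rule exI[of _ u], rule exI[of _ w'], rule exI[of _ b']) (use RE d C blb blb' wu ww' in simp)
      thus ?thesis unfolding good_def by blast
    next
      case False
      hence allt: "\<forall>y. E u y \<longrightarrow> tdom E D y" by blast
      obtain b where ub: "E u b" using noiso uV unfolding no_isolated_def by blast
      have nb: "E u y \<longleftrightarrow> y = b" for y using white_nowhite2[OF wu allt ub, of y] ub by auto
      have blb: "blue E D b" using nbrU_blue[OF nt ub] allt ub by blast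
      have rb: "res_edge V E D b z \<longleftrightarrow> z = u" for z
      proof -
        have "(E b z \<and> \<not> tdom E D z) \<longleftrightarrow> z = u"
          using blue_uniq[OF blb sym[OF ub] nt, of z] sym[OF ub] nt by blast
        thus ?thesis using RE_B[OF blb] by simp
      qed
      have d: "b \<noteq> u" using irr ub by auto
      have C: "res_component V E D u = {b,u}"
      proof (rule comp_eq)
        show "\<forall>a\<in>{b, u}. \<forall>y. res_edge V E D a y \<longrightarrow> y \<in> {b, u}"
          using rb ru nb by auto
        show "\<forall>y\<in>{b, u}. (res_edge V E D)\<^sup>*\<^sup>* u y"
          using r_into_rtranclp[of "res_edge V E D", OF ru[THEN iffD2, OF ub]] by auto
      qed simp
      have RE: "res_edges_on V E D {b,u} {{b,u}}"
        unfolding res_edges_on_def using rb ru nb d by (auto simp: doubleton_eq_iff)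
      have "\<exists>a b. a \<noteq> b \<and> res_component V E D u = {a, b}
        \<and> res_edges_on V E D (res_component V E D u) {{a, b}}
        \<and> blue E D a \<and> white E D b"
        by (rule exI[of _ b], rule exI[of _ u]) (use RE d C wu blb in simp)
      thus ?thesis unfolding good_def by blast
    qed
  qed
qed

end

theorem claim2p2:
  fixes V :: "'a set" and E :: "'a \<Rightarrow> 'a \<Rightarrow> bool" and D :: "'a set"
  assumes "simple_graph V E"
    and "no_isolated V E"
    and "\<forall>u v. E u v \<longrightarrow> degree E u + degree E v \<ge> 4"
    and "game_stage V E D"
    and "\<forall>v. legal_move V E D v \<longrightarrow> move_value V E D v \<le> 4"
    and "res_vert V E D x"
  shows "let C = res_component V E D x in
     (\<exists>a b c d. distinct [a, b, c, d] \<and> C = {a, b, c, d}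
        \<and> res_edges_on V E D C {{a, b}, {b, c}, {c, d}}
        \<and> blue E D a \<and> white E D b \<and> white E D c \<and> blue E D d)
   \<or> (\<exists>a b c. distinct [a, b, c] \<and> C = {a, b, c}
        \<and> res_edges_on V E D C {{a, b}, {b, c}}
        \<and> blue E D a \<and> green E D b \<and> blue E D c)
   \<or> (\<exists>a b. a \<noteq> b \<and> C = {a, b} \<and> res_edges_on V E D C {{a, b}}
        \<and> blue E D a \<and> green E D b)
   \<or> (\<exists>a b. a \<noteq> b \<and> C = {a, b} \<and> res_edges_on V E D C {{a, b}}
        \<and> blue E D a \<and> white E D b)"
proof -
  have T: "tdg V E D" using assms(1,2,3,5) by (simp add: tdg_def)
  have xV: "x \<in> V" and nr: "\<not> red E D x" using assms(6) by (auto simp: res_vert_def)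
  have "good V E D (res_component V E D x)"
  proof (cases "tdom E D x")
    case False
    show ?thesis by (rule tdg.main_U[OF T False xV])
  next
    case True
    then obtain w where xw: "E x w" and wnt: "\<not> tdom E D w" using nr by (auto simp: red_def)
    have wV: "w \<in> V" using tdg.inV2[OF T xw] .
    have "res_edge V E D w x" using tdg.RE_U[OF T wnt wV] tdg.sym[OF T xw] by simp
    hence "res_component V E D x = res_component V E D w"
      using tdg.comp_shift[OF T tdg.res_edge_sym[OF T]] by blast
    thus ?thesis using tdg.main_U[OF T wnt wV] by simp
  qed
  thus ?thesis unfolding good_def Let_def .
qed

end
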